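(* Let $S$ be a finite set of agents, $p>0$ a price, $k\ge 0$ an amount of a divisible good and $z\in[0,1]$. Then the expected revenue of $\mathrm{Sell\_Modif}(S,p,k,z)$ is at least $z$ times the revenue of $\mathrm{Sell\_Div}(S,p,k)$ (the expectations being over all internal randomness of the procedures, including the random partition and the random permutations).
   Context: Each agent $i$ has value $v_i\ge0$ and budget $b_i\ge0$. $\mathrm{Div\_Alloc}(S,p,k)$: set $k'\gets k$, $x_i\gets 0$; draw a uniformly random permutation $\pi$ of $S$; for $t=1,\dots,|S|$, if $v_{\pi(t)}\ge p$ set $x_{\pi(t)}\gets\min\{b_{\pi(t)}/p,k'\}$ and $k'\gets k'-x_{\pi(t)}$; return $x$. $\mathrm{Sell\_Div}(S,p,k)$: let $x=\mathrm{Div\_Alloc}(S,p,k)$ and give each $i\in S$ the amount $x_i$ at payment $x_i p$; its revenue is $p\sum_{i\in S}x_i$. $\mathrm{Sell\_Modif}(S,p,k,z)$: set $m\gets k$; independently place each $i\in S$ into $S_1$ with probability $z$ and into $S_2$ otherwise; then for each $i\in S_1$ in an arbitrary order: let $x'$ be the allocation returned by a fresh independent run of $\mathrm{Div\_Alloc}(S_2\cup\{i\},p,k)$, set $x_i\gets\min\{x'_i,m\}$, give agent $i$ amount $x_i$ at payment $x_i p$, and update $m\gets m-x_i$. Its revenue is $p\sum_{i\in S_1}x_i$. *)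

theory Defs
  imports "HOL-Probability.Probability" "HOL-Combinatorics.Multiset_Permutations"
begin

fun div_alloc_list :: "('a \<Rightarrow> real) \<Rightarrow> ('a \<Rightarrow> real) \<Rightarrow> real \<Rightarrow> real \<Rightarrow> 'a list \<Rightarrow> ('a \<Rightarrow> real)" where
  "div_alloc_list v b p kr [] = (\<lambda>_. 0)"
| "div_alloc_list v b p kr (i # is) =
     (if v i \<ge> p then
        (let xi = min (b i / p) kr in (div_alloc_list v b p (kr - xi) is)(i := xi))
      else div_alloc_list v b p kr is)"

definition Div_Alloc :: "('a \<Rightarrow> real) \<Rightarrow> ('a \<Rightarrow> real) \<Rightarrow> 'a set \<Rightarrow> real \<Rightarrow> real \<Rightarrow> ('a \<Rightarrow> real) pmf" where
  "Div_Alloc v b S p k = map_pmf (div_alloc_list v b p k) (pmf_of_set (permutations_of_set S))"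

definition Sell_Div_rev :: "('a \<Rightarrow> real) \<Rightarrow> ('a \<Rightarrow> real) \<Rightarrow> 'a set \<Rightarrow> real \<Rightarrow> real \<Rightarrow> real pmf" where
  "Sell_Div_rev v b S p k = map_pmf (\<lambda>x. p * (\<Sum>i\<in>S. x i)) (Div_Alloc v b S p k)"

text \<open>Second phase of Sell_Modif: process the agents of S1 (given as a list, in order)
  with remaining supply m; each step uses a fresh independent run of
  Div_Alloc(S2 \<union> {i}, p, k).\<close>
fun modif_run :: "('a \<Rightarrow> real) \<Rightarrow> ('a \<Rightarrow> real) \<Rightarrow> real \<Rightarrow> real \<Rightarrow> 'a set \<Rightarrow> real \<Rightarrow> 'a list \<Rightarrow> real pmf" where
  "modif_run v b p k S2 m [] = return_pmf 0"
| "modif_run v b p k S2 m (i # is) =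
     Div_Alloc v b (insert i S2) p k \<bind> (\<lambda>x'.
       (let xi = min (x' i) m in
         map_pmf (\<lambda>r. p * xi + r) (modif_run v b p k S2 (m - xi) is)))"

text \<open>Revenue distribution of Sell_Modif(S,p,k,z); ord T gives the (arbitrary) order
  in which the agents of the realized set S1 = T are processed.\<close>
definition Sell_Modif_rev :: "('a \<Rightarrow> real) \<Rightarrow> ('a \<Rightarrow> real) \<Rightarrow> ('a set \<Rightarrow> 'a list) \<Rightarrow> 'a set \<Rightarrow> real \<Rightarrow> real \<Rightarrow> real \<Rightarrow> real pmf" where
  "Sell_Modif_rev v b ord S p k z =
     Pi_pmf S False (\<lambda>_. bernoulli_pmf z) \<bind> (\<lambda>f.
       (let S1 = {i \<in> S. f i}; S2 = {i \<in> S. \<not> f i} in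
         modif_run v b p k S2 k (ord S1)))"

end

theory Submission
  imports Defs
begin

definition avgP :: "'a set \<Rightarrow> ('a list \<Rightarrow> real) \<Rightarrow> real" where
  "avgP A h = (\<Sum>\<pi>\<in>permutations_of_set A. h \<pi>) / real (card (permutations_of_set A))"

lemma avgP_empty[simp]: "avgP {} h = h []"
  by (simp add: avgP_def)

lemma avgP_rec:
  assumes "finite A" "A \<noteq> {}"
  shows "avgP A h = (\<Sum>x\<in>A. avgP (A - {x}) (\<lambda>\<pi>. h (x # \<pi>))) / real (card A)"
proof -
  let ?n = "card A"
  have n: "?n > 0" using assms by (simp add: card_gt_0_iff)
  have cA: "card (A - {x}) = ?n - 1" if "x \<in> A" for x using that assms by simp
  have "(\<Sum>\<pi>\<in>permutations_of_set A. h \<pi>) =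
        (\<Sum>x\<in>A. \<Sum>\<pi>\<in>(\<lambda>xs. x # xs) ` permutations_of_set (A - {x}). h \<pi>)"
    apply (subst permutations_of_set_nonempty[OF assms(2)])
    apply (rule sum.UNION_disjoint)
    using assms by auto
  also have "\<dots> = (\<Sum>x\<in>A. \<Sum>\<pi>\<in>permutations_of_set (A - {x}). h (x # \<pi>))"
  proof (rule sum.cong[OF refl])
    fix x assume "x \<in> A"
    have "inj_on ((#) x) (permutations_of_set (A - {x}))" by (auto simp: inj_on_def)
    from sum.reindex[OF this, of h] show "sum h ((#) x ` permutations_of_set (A - {x})) =
      (\<Sum>\<pi>\<in>permutations_of_set (A - {x}). h (x # \<pi>))" by (simp add: comp_def)
  qed
  finally have s: "(\<Sum>\<pi>\<in>permutations_of_set A. h \<pi>) = \<dots>" .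
  have f: "fact ?n = real ?n * fact (?n - 1)"
    using n by (metis fact_reduce of_nat_fact)
  show ?thesis
    unfolding avgP_def s using assms
    by (simp add: cA f sum_divide_distrib[symmetric] field_simps)
qed

lemma avgP_mono:
  assumes "\<And>\<pi>. \<pi> \<in> permutations_of_set A \<Longrightarrow> h \<pi> \<le> h' \<pi>"
  shows "avgP A h \<le> avgP A h'"
  unfolding avgP_def by (intro divide_right_mono sum_mono assms) auto

lemma avgP_const:
  assumes "finite A" shows "avgP A (\<lambda>_. c) = c"
  using assms by (simp add: avgP_def)

lemma avgP_add_const:
  assumes "finite A" shows "avgP A (\<lambda>\<pi>. c + h \<pi>) = c + avgP A h"
  using assms by (simp add: avgP_def sum.distrib field_simps)

lemma avgP_cmult:
  shows "avgP A (\<lambda>\<pi>. c * h \<pi>) = c * avgP A h"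
  by (simp add: avgP_def sum_distrib_left)

lemma avgP_sum:
  shows "avgP A (\<lambda>\<pi>. \<Sum>y\<in>Y. F y \<pi>) = (\<Sum>y\<in>Y. avgP A (F y))"
  by (simp add: avgP_def sum.swap[of _ Y] sum_divide_distrib)

lemma avgP_divide:
  shows "avgP A (\<lambda>\<pi>. h \<pi> / c) = avgP A h / c"
  by (simp add: avgP_def sum_divide_distrib mult.commute)

lemma avgP_reindex:
  assumes "bij_betw \<phi> (permutations_of_set A) (permutations_of_set B)"
  shows "avgP B h = avgP A (\<lambda>\<pi>. h (\<phi> \<pi>))"
  unfolding avgP_def using assms
  by (simp add: bij_betw_same_card[OF assms] sum.reindex_bij_betw[OF assms, symmetric])

lemma expectation_pmf_of_perms:
  assumes "finite A"
  shows "measure_pmf.expectation (pmf_of_set (permutations_of_set A)) h = avgP A h"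
  using assms by (simp add: integral_pmf_of_set avgP_def)

fun pre :: "('a \<Rightarrow> real) \<Rightarrow> 'a list \<Rightarrow> 'a \<Rightarrow> real" where
  "pre w [] i = 0"
| "pre w (x # xs) i = (if x = i then 0 else w x + pre w xs i)"

definition Acp :: "('a \<Rightarrow> real) \<Rightarrow> ('a \<Rightarrow> real \<Rightarrow> real) \<Rightarrow> real \<Rightarrow> 'a set \<Rightarrow> 'a list \<Rightarrow> real" where
  "Acp w g s G \<pi> = (\<Sum>i\<in>G. g i (s + pre w \<pi> i))"

definition sw :: "'a \<Rightarrow> 'a \<Rightarrow> 'a \<Rightarrow> 'a" where
  "sw a b x = (if x = a then b else if x = b then a else x)"

lemma pre_nonneg: "(\<forall>x. 0 \<le> w x) \<Longrightarrow> 0 \<le> pre w xs i"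
  by (induction xs) auto

lemma pre_swap_tail:
  assumes "\<forall>x. 0 \<le> w x" "w x \<le> w x'" "x \<notin> set \<pi>" "distinct \<pi>" "i \<noteq> x" "i \<noteq> x'"
  shows "pre w (map (sw x x') \<pi>) i \<ge> pre w \<pi> i + (w x - w x')"
  using assms(3-)
proof (induction \<pi>)
  case Nil then show ?case using assms(2) by simp
next
  case (Cons y ys)
  show ?case
  proof (cases "y = i")
    case True
    then show ?thesis using Cons.prems assms(2) by (simp add: sw_def)
  next
    case False
    have yi: "sw x x' y \<noteq> i" using False Cons.prems by (auto simp: sw_def)
    show ?thesis
    proof (cases "y = x'")
      case True
      have "map (sw x x') ys = ys"
        using Cons.prems True by (intro map_idI) (auto simp: sw_def)
      then show ?thesis using True False Cons.prems by (simp add: sw_def[of x x' x'])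
    next
      case False2: False
      have "sw x x' y = y" using False2 Cons.prems by (auto simp: sw_def)
      then show ?thesis using Cons.IH Cons.prems False yi by auto
    qed
  qed
qed

lemma pre_swap_head:
  assumes "\<forall>x. 0 \<le> w x" "w x \<le> w x'" "x \<notin> set \<pi>" "distinct \<pi>" "i \<noteq> x'" "x \<noteq> x'"
  shows "pre w (map (sw x x') (x # \<pi>)) i \<ge> pre w (x # \<pi>) i"
proof (cases "i = x")
  case True
  then show ?thesis using assms pre_nonneg[of w] by (simp add: sw_def)
next
  case False
  have "sw x x' x = x'" by (simp add: sw_def)
  then show ?thesis using pre_swap_tail[OF assms(1-4) False assms(5)] False assms(5)
    by simp
qed

lemma Acp_swap_head:
  assumes "\<forall>x. 0 \<le> w x" "w x \<le> w x'" "x \<notin> set \<pi>" "distinct \<pi>" "x' \<notin> G" "x \<noteq> x'"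
    and anti: "\<And>i y y'. y \<le> y' \<Longrightarrow> g i y' \<le> g i y"
  shows "Acp w g s G (map (sw x x') (x # \<pi>)) \<le> Acp w g s G (x # \<pi>)"
  unfolding Acp_def
proof (rule sum_mono)
  fix i assume "i \<in> G"
  then have "i \<noteq> x'" using assms by auto
  from pre_swap_head[OF assms(1-4) this assms(6)]
  show "g i (s + pre w (map (sw x x') (x # \<pi>)) i) \<le> g i (s + pre w (x # \<pi>) i)"
    by (intro anti) simp
qed

lemma sw_image:
  assumes "x \<in> V" "x' \<in> V"
  shows "sw x x' ` (V - {x}) = V - {x'}"
  using assms by (auto simp: sw_def image_iff)

lemma bij_sw_perms:
  assumes "x \<in> V" "x' \<in> V"
  shows "bij_betw (map (sw x x')) (permutations_of_set (V - {x})) (permutations_of_set (V - {x'}))"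
proof -
  have inj: "inj (sw x x')" by (auto simp: inj_def sw_def split: if_splits)
  have "permutations_of_set (sw x x' ` (V - {x})) = map (sw x x') ` permutations_of_set (V - {x})"
    by (rule permutations_of_set_image_inj) (use inj in \<open>auto simp: inj_on_def\<close>)
  moreover have "inj_on (map (sw x x')) (permutations_of_set (V - {x}))"
    using inj by (auto simp: inj_on_def inj_map_eq_map)
  ultimately show ?thesis using sw_image[OF assms] by (simp add: bij_betw_def)
qed

definition Rf :: "(real \<Rightarrow> real) \<Rightarrow> bool" where
  "Rf f \<longleftrightarrow> (\<forall>a a' b b'. a' \<le> a \<longrightarrow> b' \<le> b \<longrightarrow> f (a + b) + f (a' + b') \<le> f (a + b') + f (a' + b))"

lemma Rf_shift: "Rf f \<Longrightarrow> Rf (\<lambda>t. f (c + t))"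
  unfolding Rf_def
proof (intro allI impI)
  fix a a' b b' :: real assume R: "\<forall>a a' b b'. a' \<le> a \<longrightarrow> b' \<le> b \<longrightarrow> f (a + b) + f (a' + b') \<le> f (a + b') + f (a' + b)"
    and h: "a' \<le> a" "b' \<le> b"
  have "c + a' \<le> c + a" using h by simp
  from R[rule_format, OF this h(2)] show "f (c + (a + b)) + f (c + (a' + b')) \<le> f (c + (a + b')) + f (c + (a' + b))"
    by (simp add: add.assoc)
qed

lemma avgP_add: "avgP A (\<lambda>\<pi>. h \<pi> + h' \<pi>) = avgP A h + avgP A h'"
  by (simp add: avgP_def sum.distrib add_divide_distrib)

lemma rect_avgP:
  assumes R: "Rf f"
    and bp: "bij_betw \<phi> (permutations_of_set A) (permutations_of_set A')"
    and bq: "bij_betw \<psi> (permutations_of_set B) (permutations_of_set B')"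
    and ha: "\<And>\<pi>. \<pi> \<in> permutations_of_set A \<Longrightarrow> \<alpha>' (\<phi> \<pi>) \<le> \<alpha> \<pi>"
    and hb: "\<And>\<rho>. \<rho> \<in> permutations_of_set B \<Longrightarrow> \<beta>' (\<psi> \<rho>) \<le> \<beta> \<rho>"
  shows "avgP A (\<lambda>\<pi>. avgP B (\<lambda>\<rho>. f (\<alpha> \<pi> + \<beta> \<rho>))) + avgP A' (\<lambda>\<pi>. avgP B' (\<lambda>\<rho>. f (\<alpha>' \<pi> + \<beta>' \<rho>)))
       \<le> avgP A (\<lambda>\<pi>. avgP B' (\<lambda>\<rho>. f (\<alpha> \<pi> + \<beta>' \<rho>))) + avgP A' (\<lambda>\<pi>. avgP B (\<lambda>\<rho>. f (\<alpha>' \<pi> + \<beta> \<rho>)))"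
proof -
  have e1: "avgP A' (\<lambda>\<pi>. avgP B' (\<lambda>\<rho>. f (\<alpha>' \<pi> + \<beta>' \<rho>))) = avgP A (\<lambda>\<pi>. avgP B (\<lambda>\<rho>. f (\<alpha>' (\<phi> \<pi>) + \<beta>' (\<psi> \<rho>))))"
    by (subst avgP_reindex[OF bp]) (subst avgP_reindex[OF bq], rule refl)
  have e2: "avgP A (\<lambda>\<pi>. avgP B' (\<lambda>\<rho>. f (\<alpha> \<pi> + \<beta>' \<rho>))) = avgP A (\<lambda>\<pi>. avgP B (\<lambda>\<rho>. f (\<alpha> \<pi> + \<beta>' (\<psi> \<rho>))))"
    by (subst avgP_reindex[OF bq]) (rule refl)
  have e3: "avgP A' (\<lambda>\<pi>. avgP B (\<lambda>\<rho>. f (\<alpha>' \<pi> + \<beta> \<rho>))) = avgP A (\<lambda>\<pi>. avgP B (\<lambda>\<rho>. f (\<alpha>' (\<phi> \<pi>) + \<beta> \<rho>)))"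
    by (subst avgP_reindex[OF bp]) (rule refl)
  have pt: "f (\<alpha> \<pi> + \<beta> \<rho>) + f (\<alpha>' (\<phi> \<pi>) + \<beta>' (\<psi> \<rho>)) \<le> f (\<alpha> \<pi> + \<beta>' (\<psi> \<rho>)) + f (\<alpha>' (\<phi> \<pi>) + \<beta> \<rho>)"
    if "\<pi> \<in> permutations_of_set A" "\<rho> \<in> permutations_of_set B" for \<pi> \<rho>
    using R ha[OF that(1)] hb[OF that(2)] unfolding Rf_def by blast
  have "avgP A (\<lambda>\<pi>. avgP B (\<lambda>\<rho>. f (\<alpha> \<pi> + \<beta> \<rho>))) + avgP A (\<lambda>\<pi>. avgP B (\<lambda>\<rho>. f (\<alpha>' (\<phi> \<pi>) + \<beta>' (\<psi> \<rho>))))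
     = avgP A (\<lambda>\<pi>. avgP B (\<lambda>\<rho>. f (\<alpha> \<pi> + \<beta> \<rho>) + f (\<alpha>' (\<phi> \<pi>) + \<beta>' (\<psi> \<rho>))))"
    by (simp only: avgP_add)
  also have "\<dots> \<le> avgP A (\<lambda>\<pi>. avgP B (\<lambda>\<rho>. f (\<alpha> \<pi> + \<beta>' (\<psi> \<rho>)) + f (\<alpha>' (\<phi> \<pi>) + \<beta> \<rho>)))"
    by (intro avgP_mono pt)
  also have "\<dots> = avgP A (\<lambda>\<pi>. avgP B (\<lambda>\<rho>. f (\<alpha> \<pi> + \<beta>' (\<psi> \<rho>)))) + avgP A (\<lambda>\<pi>. avgP B (\<lambda>\<rho>. f (\<alpha>' (\<phi> \<pi>) + \<beta> \<rho>)))"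
    by (simp only: avgP_add)
  finally show ?thesis unfolding e1 e2 e3 .
qed

lemma Acp_cons_out:
  "x \<notin> G \<Longrightarrow> Acp w g s G (x # \<pi>) = Acp w g (s + w x) G \<pi>"
  unfolding Acp_def by (intro sum.cong refl) (auto simp: add.assoc)

lemma Acp_cons_in:
  assumes "finite G" "x \<in> G" "w x = 0"
  shows "Acp w g s G (x # \<pi>) = g x s + Acp w g s (G - {x}) \<pi>"
proof -
  have "Acp w g s G (x # \<pi>) = g x (s + pre w (x # \<pi>) x) + (\<Sum>i\<in>G - {x}. g i (s + pre w (x # \<pi>) i))"
    unfolding Acp_def using assms by (simp add: sum.remove)
  also have "\<dots> = g x s + Acp w g s (G - {x}) \<pi>"
    unfolding Acp_def using assms by (intro arg_cong2[where f="(+)"] sum.cong) auto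
  finally show ?thesis .
qed

lemma avgP_inner_rec:
  assumes "finite B" "B \<noteq> {}"
  shows "avgP A (\<lambda>\<pi>1. avgP B (K \<pi>1)) = (\<Sum>y\<in>B. avgP A (\<lambda>\<pi>1. avgP (B - {y}) (\<lambda>\<pi>2. K \<pi>1 (y # \<pi>2)))) / real (card B)"
  by (subst avgP_rec[OF assms]) (simp add: avgP_divide avgP_sum)

theorem split_ineq:
  fixes w :: "'a \<Rightarrow> real" and g :: "'a \<Rightarrow> real \<Rightarrow> real"
  assumes w0: "\<forall>x. 0 \<le> w x" and anti: "\<And>i y y'. y \<le> y' \<Longrightarrow> g i y' \<le> g i y"
  shows "finite G1 \<Longrightarrow> finite G2 \<Longrightarrow> finite U \<Longrightarrow> G1 \<inter> G2 = {} \<Longrightarrow> G1 \<inter> U = {} \<Longrightarrow> G2 \<inter> U = {}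
    \<Longrightarrow> (\<forall>x\<in>G1 \<union> G2. w x = 0) \<Longrightarrow> Rf f \<Longrightarrow>
    avgP (G1 \<union> G2 \<union> U) (\<lambda>\<pi>. f (Acp w g s G1 \<pi> + Acp w g s G2 \<pi>))
    \<le> avgP (G1 \<union> U) (\<lambda>\<pi>1. avgP (G2 \<union> U) (\<lambda>\<pi>2. f (Acp w g s G1 \<pi>1 + Acp w g s G2 \<pi>2)))"
proof (induction "card (G1 \<union> G2 \<union> U)" arbitrary: G1 G2 U s f rule: less_induct)
  case less
  note fin = less.prems(1-3) and dis = less.prems(4-6) and wz = less.prems(7) and R = less.prems(8)
  define A where "A = Acp w g"
  show ?case
  proof (cases "G1 = {} \<or> G2 = {}")
    case True
    then show ?thesis
    proof
      assume "G1 = {}"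
      then show ?thesis using fin by (simp add: Acp_def avgP_const)
    next
      assume "G2 = {}"
      then show ?thesis using fin by (simp add: Acp_def avgP_const)
    qed
  next
    case False
    then have G1ne: "G1 \<noteq> {}" and G2ne: "G2 \<noteq> {}" by auto
    define V where "V = G1 \<union> G2 \<union> U"
    define N where "N = real (card V)"
    define N1 where "N1 = real (card (G1 \<union> U))"
    define N2 where "N2 = real (card (G2 \<union> U))"
    define t1 where "t1 = real (card G1)"
    define t2 where "t2 = real (card G2)"
    define n where "n = real (card U)"
    have finV: "finite V" using fin by (simp add: V_def)
    have N_eq: "N = t1 + t2 + n" unfolding N_def t1_def t2_def n_def V_def
      using fin dis by (simp add: card_Un_disjoint Int_Un_distrib2)
    have N1_eq: "N1 = t1 + n" unfolding N1_def t1_def n_def using fin dis by (simp add: card_Un_disjoint)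
    have N2_eq: "N2 = t2 + n" unfolding N2_def t2_def n_def using fin dis by (simp add: card_Un_disjoint)
    have t1pos: "t1 > 0" unfolding t1_def using fin G1ne by (simp add: card_gt_0_iff)
    have t2pos: "t2 > 0" unfolding t2_def using fin G2ne by (simp add: card_gt_0_iff)
    have n0: "n \<ge> 0" unfolding n_def by simp
    define H where "H = (\<lambda>\<pi>1 \<pi>2. f (A s G1 \<pi>1 + A s G2 \<pi>2))"
    define \<Psi> where "\<Psi> = (\<lambda>x y. avgP ((G1 \<union> U) - {x}) (\<lambda>\<pi>1. avgP ((G2 \<union> U) - {y}) (\<lambda>\<pi>2. H (x # \<pi>1) (y # \<pi>2))))"
    have rhs: "avgP (G1 \<union> U) (\<lambda>\<pi>1. avgP (G2 \<union> U) (H \<pi>1)) = (\<Sum>x\<in>G1 \<union> U. \<Sum>y\<in>G2 \<union> U. \<Psi> x y) / (N1 * N2)"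
    proof -
      have "avgP (G1 \<union> U) (\<lambda>\<pi>1. avgP (G2 \<union> U) (H \<pi>1)) =
        (\<Sum>x\<in>G1 \<union> U. avgP ((G1 \<union> U) - {x}) (\<lambda>\<pi>1. avgP (G2 \<union> U) (H (x # \<pi>1)))) / N1"
        unfolding N1_def using fin G1ne by (subst avgP_rec) auto
      also have "\<dots> = (\<Sum>x\<in>G1 \<union> U. (\<Sum>y\<in>G2 \<union> U. \<Psi> x y) / N2) / N1"
        unfolding \<Psi>_def N2_def using fin G2ne by (subst avgP_inner_rec) auto
      finally show ?thesis by (simp add: sum_divide_distrib[symmetric])
    qed
    have lhs: "avgP V (\<lambda>\<pi>. H \<pi> \<pi>) = (\<Sum>x\<in>V. avgP (V - {x}) (\<lambda>\<pi>. H (x # \<pi>) (x # \<pi>))) / N"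
      unfolding N_def using finV G1ne by (subst avgP_rec) (auto simp: V_def)
    have cardlt: "card (V - {x}) < card (G1 \<union> G2 \<union> U)" if "x \<in> V" for x
      using card_Diff1_less[OF finV that] by (simp add: V_def)
    have T1: "avgP (V - {x}) (\<lambda>\<pi>. H (x # \<pi>) (x # \<pi>)) \<le> (\<Sum>y\<in>G2 \<union> U. \<Psi> x y) / N2" if x: "x \<in> G1" for x
    proof -
      have xn: "x \<notin> G2" "x \<notin> U" "w x = 0" using x dis wz by auto
      have eV: "V - {x} = (G1 - {x}) \<union> G2 \<union> U" using xn by (auto simp: V_def)
      have eH: "H (x # \<pi>) (x # \<pi>) = (\<lambda>t. f (g x s + t)) (A s (G1 - {x}) \<pi> + A s G2 \<pi>)" for \<pi>
        unfolding H_def A_def using fin x xn by (simp add: Acp_cons_in Acp_cons_out add.assoc)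
      have "avgP (V - {x}) (\<lambda>\<pi>. H (x # \<pi>) (x # \<pi>)) \<le>
        avgP ((G1 - {x}) \<union> U) (\<lambda>\<pi>1. avgP (G2 \<union> U) (\<lambda>\<pi>2. (\<lambda>t. f (g x s + t)) (A s (G1 - {x}) \<pi>1 + A s G2 \<pi>2)))"
        unfolding eH eV A_def
        by (rule less.hyps) (use cardlt[of x] x fin dis wz Rf_shift[OF R] in \<open>auto simp: V_def eV[symmetric]\<close>)
      also have "\<dots> = avgP ((G1 \<union> U) - {x}) (\<lambda>\<pi>1. avgP (G2 \<union> U) (\<lambda>\<pi>2. H (x # \<pi>1) \<pi>2))"
        unfolding H_def A_def using fin x xn
        by (simp add: Acp_cons_in add.assoc Un_Diff)
      also have "\<dots> = (\<Sum>y\<in>G2 \<union> U. \<Psi> x y) / N2"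
        unfolding \<Psi>_def N2_def using fin G2ne by (subst avgP_inner_rec) auto
      finally show ?thesis .
    qed
    have T2: "avgP (V - {x}) (\<lambda>\<pi>. H (x # \<pi>) (x # \<pi>)) \<le> (\<Sum>x'\<in>G1 \<union> U. \<Psi> x' x) / N1" if x: "x \<in> G2" for x
    proof -
      have xn: "x \<notin> G1" "x \<notin> U" "w x = 0" using x dis wz by auto
      have eV: "V - {x} = G1 \<union> (G2 - {x}) \<union> U" using xn by (auto simp: V_def)
      have eH: "H (x # \<pi>) (x # \<pi>) = (\<lambda>t. f (g x s + t)) (A s G1 \<pi> + A s (G2 - {x}) \<pi>)" for \<pi>
        unfolding H_def A_def using fin x xn by (simp add: Acp_cons_in Acp_cons_out algebra_simps)
      have "avgP (V - {x}) (\<lambda>\<pi>. H (x # \<pi>) (x # \<pi>)) \<le>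
        avgP (G1 \<union> U) (\<lambda>\<pi>1. avgP ((G2 - {x}) \<union> U) (\<lambda>\<pi>2. (\<lambda>t. f (g x s + t)) (A s G1 \<pi>1 + A s (G2 - {x}) \<pi>2)))"
        unfolding eH eV A_def
        by (rule less.hyps) (use cardlt[of x] x fin dis wz Rf_shift[OF R] in \<open>auto simp: V_def eV[symmetric]\<close>)
      also have "\<dots> = avgP (G1 \<union> U) (\<lambda>\<pi>1. avgP ((G2 \<union> U) - {x}) (\<lambda>\<pi>2. H \<pi>1 (x # \<pi>2)))"
        unfolding H_def A_def using fin x xn
        by (simp add: Acp_cons_in algebra_simps Un_Diff)
      also have "\<dots> = (\<Sum>x'\<in>G1 \<union> U. \<Psi> x' x) / N1"
        unfolding \<Psi>_def N1_def using fin G1ne by (subst avgP_rec) auto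
      finally show ?thesis .
    qed
    have T3: "avgP (V - {u}) (\<lambda>\<pi>. H (u # \<pi>) (u # \<pi>)) \<le> \<Psi> u u" if u: "u \<in> U" for u
    proof -
      have un: "u \<notin> G1" "u \<notin> G2" using u dis by auto
      have eV: "V - {u} = G1 \<union> G2 \<union> (U - {u})" using un by (auto simp: V_def)
      have eH: "H (u # \<pi>) (u # \<pi>') = f (A (s + w u) G1 \<pi> + A (s + w u) G2 \<pi>')" for \<pi> \<pi>'
        unfolding H_def A_def using un by (simp add: Acp_cons_out)
      have "avgP (V - {u}) (\<lambda>\<pi>. H (u # \<pi>) (u # \<pi>)) \<le>
        avgP (G1 \<union> (U - {u})) (\<lambda>\<pi>1. avgP (G2 \<union> (U - {u})) (\<lambda>\<pi>2. f (A (s + w u) G1 \<pi>1 + A (s + w u) G2 \<pi>2)))"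
        unfolding eH eV A_def
        by (rule less.hyps) (use cardlt[of u] u fin dis wz R in \<open>auto simp: V_def eV[symmetric]\<close>)
      also have "\<dots> = \<Psi> u u"
        unfolding \<Psi>_def eH using un by (simp add: Un_Diff)
      finally show ?thesis .
    qed
    have rectPsi: "\<Psi> x y + \<Psi> x' y' \<le> \<Psi> x y' + \<Psi> x' y"
      if xs: "x \<in> G1 \<union> U" "x' \<in> G1 \<union> U" "y \<in> G2 \<union> U" "y' \<in> G2 \<union> U"
        and ns: "x' \<notin> G1" "y' \<notin> G2" "w x \<le> w x'" "w y \<le> w y'" "x \<noteq> x'" "y \<noteq> y'" for x x' y y'
    proof -
      have "avgP ((G1 \<union> U) - {x}) (\<lambda>\<pi>1. avgP ((G2 \<union> U) - {y}) (\<lambda>\<pi>2. f (A s G1 (x # \<pi>1) + A s G2 (y # \<pi>2))))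
          + avgP ((G1 \<union> U) - {x'}) (\<lambda>\<pi>1. avgP ((G2 \<union> U) - {y'}) (\<lambda>\<pi>2. f (A s G1 (x' # \<pi>1) + A s G2 (y' # \<pi>2))))
        \<le> avgP ((G1 \<union> U) - {x}) (\<lambda>\<pi>1. avgP ((G2 \<union> U) - {y'}) (\<lambda>\<pi>2. f (A s G1 (x # \<pi>1) + A s G2 (y' # \<pi>2))))
          + avgP ((G1 \<union> U) - {x'}) (\<lambda>\<pi>1. avgP ((G2 \<union> U) - {y}) (\<lambda>\<pi>2. f (A s G1 (x' # \<pi>1) + A s G2 (y # \<pi>2))))"
      proof (rule rect_avgP[OF R bij_sw_perms[OF xs(1,2)] bij_sw_perms[OF xs(3,4)]])
        fix \<pi> assume "\<pi> \<in> permutations_of_set (G1 \<union> U - {x})"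
        then have "x \<notin> set \<pi>" "distinct \<pi>" by (auto simp: permutations_of_set_def)
        from Acp_swap_head[OF w0 ns(3) this ns(1) ns(5) anti]
        show "A s G1 (x' # map (sw x x') \<pi>) \<le> A s G1 (x # \<pi>)"
          unfolding A_def by (simp add: sw_def)
      next
        fix \<pi> assume "\<pi> \<in> permutations_of_set (G2 \<union> U - {y})"
        then have "y \<notin> set \<pi>" "distinct \<pi>" by (auto simp: permutations_of_set_def)
        from Acp_swap_head[OF w0 ns(4) this ns(2) ns(6) anti]
        show "A s G2 (y' # map (sw y y') \<pi>) \<le> A s G2 (y # \<pi>)"
          unfolding A_def by (simp add: sw_def)
      qed
      then show ?thesis unfolding \<Psi>_def H_def .
    qed
    have R1: "\<Psi> e e' + \<Psi> u u \<le> \<Psi> e u + \<Psi> u e'" if "e \<in> G1" "e' \<in> G2" "u \<in> U" for e e' u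
      using that dis wz w0 by (intro rectPsi) auto
    have R2: "\<Psi> u u + \<Psi> v v \<le> \<Psi> u v + \<Psi> v u" if "u \<in> U" "v \<in> U" for u v
    proof (cases "u = v")
      case True then show ?thesis by simp
    next
      case False
      show ?thesis
      proof (cases "w u \<le> w v")
        case True
        then show ?thesis using that dis False by (intro rectPsi) auto
      next
        case F2: False
        have "\<Psi> v v + \<Psi> u u \<le> \<Psi> v u + \<Psi> u v"
          using that dis False F2 by (intro rectPsi) auto
        then show ?thesis by simp
      qed
    qed
    define SGG where "SGG = (\<Sum>e\<in>G1. \<Sum>e'\<in>G2. \<Psi> e e')"
    define SGU where "SGU = (\<Sum>e\<in>G1. \<Sum>u\<in>U. \<Psi> e u)"
    define SUG where "SUG = (\<Sum>u\<in>U. \<Sum>e'\<in>G2. \<Psi> u e')"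
    define SUU where "SUU = (\<Sum>u\<in>U. \<Sum>v\<in>U. \<Psi> u v)"
    define D where "D = (\<Sum>u\<in>U. \<Psi> u u)"
    have dis1: "G1 \<inter> G2 = {}" "G1 \<inter> U = {}" "G2 \<inter> U = {}" using dis by auto
    have Lsum: "(\<Sum>x\<in>V. avgP (V - {x}) (\<lambda>\<pi>. H (x # \<pi>) (x # \<pi>))) \<le>
       (\<Sum>x\<in>G1. (\<Sum>y\<in>G2 \<union> U. \<Psi> x y) / N2) + (\<Sum>x\<in>G2. (\<Sum>x'\<in>G1 \<union> U. \<Psi> x' x) / N1) + (\<Sum>u\<in>U. \<Psi> u u)"
    proof -
      have "(\<Sum>x\<in>V. avgP (V - {x}) (\<lambda>\<pi>. H (x # \<pi>) (x # \<pi>))) =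
        (\<Sum>x\<in>G1. avgP (V - {x}) (\<lambda>\<pi>. H (x # \<pi>) (x # \<pi>))) + (\<Sum>x\<in>G2. avgP (V - {x}) (\<lambda>\<pi>. H (x # \<pi>) (x # \<pi>)))
        + (\<Sum>x\<in>U. avgP (V - {x}) (\<lambda>\<pi>. H (x # \<pi>) (x # \<pi>)))"
        unfolding V_def using fin dis1 by (simp add: sum.union_disjoint Int_Un_distrib2)
      also have "\<dots> \<le> (\<Sum>x\<in>G1. (\<Sum>y\<in>G2 \<union> U. \<Psi> x y) / N2) + (\<Sum>x\<in>G2. (\<Sum>x'\<in>G1 \<union> U. \<Psi> x' x) / N1) + (\<Sum>u\<in>U. \<Psi> u u)"
        by (intro add_mono sum_mono T1 T2 T3)
      finally show ?thesis .
    qed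
    have e1: "(\<Sum>x\<in>G1. (\<Sum>y\<in>G2 \<union> U. \<Psi> x y) / N2) = (SGG + SGU) / N2"
      unfolding SGG_def SGU_def using fin dis1
      by (simp add: sum.union_disjoint sum.distrib sum_divide_distrib[symmetric])
    have e2: "(\<Sum>x\<in>G2. (\<Sum>x'\<in>G1 \<union> U. \<Psi> x' x) / N1) = (SGG + SUG) / N1"
    proof -
      have "(\<Sum>x\<in>G2. \<Sum>x'\<in>G1 \<union> U. \<Psi> x' x) = (\<Sum>x'\<in>G1 \<union> U. \<Sum>x\<in>G2. \<Psi> x' x)"
        by (rule sum.swap)
      also have "\<dots> = SGG + SUG"
        unfolding SGG_def SUG_def using fin dis1 by (simp add: sum.union_disjoint)
      finally show ?thesis by (simp add: sum_divide_distrib[symmetric])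
    qed
    have e3: "(\<Sum>x\<in>G1 \<union> U. \<Sum>y\<in>G2 \<union> U. \<Psi> x y) = SGG + SGU + SUG + SUU"
      unfolding SGG_def SGU_def SUG_def SUU_def using fin dis1
      by (simp add: sum.union_disjoint sum.distrib)
    have R1sum: "n * SGG + t1 * (t2 * D) \<le> t2 * SGU + t1 * SUG"
    proof -
      have "(\<Sum>e\<in>G1. \<Sum>e'\<in>G2. \<Sum>u\<in>U. \<Psi> e e' + \<Psi> u u) \<le> (\<Sum>e\<in>G1. \<Sum>e'\<in>G2. \<Sum>u\<in>U. \<Psi> e u + \<Psi> u e')"
        by (intro sum_mono R1)
      moreover have "(\<Sum>e\<in>G1. \<Sum>e'\<in>G2. \<Sum>u\<in>U. \<Psi> e e' + \<Psi> u u) = n * SGG + t1 * (t2 * D)"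
        unfolding SGG_def D_def n_def t1_def t2_def
        by (simp add: sum.distrib sum_distrib_left)
      moreover have "(\<Sum>e\<in>G1. \<Sum>e'\<in>G2. \<Sum>u\<in>U. \<Psi> e u + \<Psi> u e') = t2 * SGU + t1 * SUG"
      proof -
        have sw1: "(\<Sum>e'\<in>G2. \<Sum>u\<in>U. \<Psi> u e') = (\<Sum>u\<in>U. \<Sum>e'\<in>G2. \<Psi> u e')" by (rule sum.swap)
        show ?thesis unfolding SGU_def SUG_def t1_def t2_def
          by (simp add: sum.distrib sum_distrib_left sw1)
      qed
      ultimately show ?thesis by simp
    qed
    have R2sum: "n * D \<le> SUU"
    proof -
      have "(\<Sum>u\<in>U. \<Sum>v\<in>U. \<Psi> u u + \<Psi> v v) \<le> (\<Sum>u\<in>U. \<Sum>v\<in>U. \<Psi> u v + \<Psi> v u)"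
        by (intro sum_mono R2)
      moreover have "(\<Sum>u\<in>U. \<Sum>v\<in>U. \<Psi> u u + \<Psi> v v) = 2 * (n * D)"
        unfolding D_def n_def by (simp add: sum.distrib sum_distrib_left)
      moreover have "(\<Sum>u\<in>U. \<Sum>v\<in>U. \<Psi> u v + \<Psi> v u) = 2 * SUU"
      proof -
        have sw1: "(\<Sum>u\<in>U. \<Sum>v\<in>U. \<Psi> v u) = (\<Sum>v\<in>U. \<Sum>u\<in>U. \<Psi> v u)" by (rule sum.swap)
        show ?thesis unfolding SUU_def by (simp add: sum.distrib sw1)
      qed
      ultimately show ?thesis by simp
    qed
    have Npos: "N > 0" "N1 > 0" "N2 > 0" using N_eq N1_eq N2_eq t1pos t2pos n0 by auto
    have key: "N * (n * D) \<le> N * SUU" using R2sum Npos by simp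
    have num: "N1 * (SGG + SGU) + N2 * (SGG + SUG) + N1 * N2 * D \<le> N * (SGG + SGU + SUG + SUU)"
    proof -
      have "N1 * (SGG + SGU) + N2 * (SGG + SUG) + N1 * N2 * D
         = (t1 + n) * (SGG + SGU) + (t2 + n) * (SGG + SUG) + (t1 + n) * (t2 + n) * D"
        by (simp add: N1_eq N2_eq)
      also have "\<dots> = N * (SGG + SGU + SUG + SUU) + (n * SGG + t1 * (t2 * D) - (t2 * SGU + t1 * SUG))
           - (N * SUU - N * (n * D))"
        by (simp add: N_eq algebra_simps)
      also have "\<dots> \<le> N * (SGG + SGU + SUG + SUU)" using R1sum key by simp
      finally show ?thesis .
    qed
    have "avgP V (\<lambda>\<pi>. H \<pi> \<pi>) \<le> ((SGG + SGU) / N2 + (SGG + SUG) / N1 + D) / N"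
      unfolding lhs using Lsum e1 e2 Npos D_def by (simp add: divide_right_mono)
    also have "\<dots> = (N1 * (SGG + SGU) + N2 * (SGG + SUG) + N1 * N2 * D) / (N * N1 * N2)"
      using Npos by (simp add: field_simps)
    also have "\<dots> \<le> (N * (SGG + SGU + SUG + SUU)) / (N * N1 * N2)"
      using num Npos by (intro divide_right_mono) auto
    also have "\<dots> = avgP (G1 \<union> U) (\<lambda>\<pi>1. avgP (G2 \<union> U) (H \<pi>1))"
      unfolding rhs e3 using Npos by simp
    finally show ?thesis unfolding H_def A_def V_def .
  qed
qed

lemma dal_zero_out:
  "i \<notin> set \<pi> \<Longrightarrow> div_alloc_list v b p kr \<pi> i = 0"
  by (induction \<pi> arbitrary: kr) (auto simp: Let_def)

lemma dal_formula:
  assumes p: "p > 0" and b: "\<forall>x. 0 \<le> b x"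
  shows "kr \<ge> 0 \<Longrightarrow> distinct \<pi> \<Longrightarrow> div_alloc_list v b p kr \<pi> i =
    (if i \<in> set \<pi> \<and> p \<le> v i then min (b i / p) (max 0 (kr - pre (\<lambda>x. if p \<le> v x then b x / p else 0) \<pi> i)) else 0)"
proof (induction \<pi> arbitrary: kr)
  case Nil then show ?case by simp
next
  case (Cons x xs)
  define w where "w = (\<lambda>x. if p \<le> v x then b x / p else 0)"
  have w0: "\<forall>x. 0 \<le> w x" using b p by (auto simp: w_def)
  have bx: "0 \<le> b x / p" using b p by simp
  show ?case
  proof (cases "x = i")
    case True
    then show ?thesis using Cons.prems dal_zero_out[of i xs] by (auto simp: Let_def)
  next
    case False
    show ?thesis
    proof (cases "p \<le> v x")
      case True
      have kr': "kr - min (b x / p) kr \<ge> 0" by simp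
      have pre0: "0 \<le> pre w xs i" using pre_nonneg[OF w0] .
      have "max 0 (kr - min (b x / p) kr - pre w xs i) = max 0 (kr - (b x / p + pre w xs i))"
        using Cons.prems(1) bx pre0 by (auto simp: min_def max_def)
      moreover have "w x = b x / p" using True by (simp add: w_def)
      ultimately show ?thesis using True False Cons.IH[OF kr'] Cons.prems
        by (auto simp: Let_def w_def[symmetric] diff_diff_eq)
    next
      case F2: False
      moreover have "w x = 0" using F2 by (simp add: w_def)
      ultimately show ?thesis using False Cons.IH[of kr] Cons.prems by (auto simp: Let_def w_def[symmetric])
    qed
  qed
qed

lemma dal_nonneg:
  assumes "p > 0" "\<forall>x. 0 \<le> b x"
  shows "kr \<ge> 0 \<Longrightarrow> div_alloc_list v b p kr \<pi> i \<ge> 0"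
  using assms by (induction \<pi> arbitrary: kr) (auto simp: Let_def)

lemma dal_sum_le:
  assumes "p > 0" "\<forall>x. 0 \<le> b x"
  shows "kr \<ge> 0 \<Longrightarrow> distinct \<pi> \<Longrightarrow> (\<Sum>i\<in>set \<pi>. div_alloc_list v b p kr \<pi> i) \<le> kr"
proof (induction \<pi> arbitrary: kr)
  case Nil then show ?case by simp
next
  case (Cons x xs)
  show ?case
  proof (cases "p \<le> v x")
    case True
    define xi where "xi = min (b x / p) kr"
    have "kr - xi \<ge> 0" by (simp add: xi_def)
    from Cons.IH[OF this] Cons.prems have ih: "(\<Sum>i\<in>set xs. div_alloc_list v b p (kr - xi) xs i) \<le> kr - xi" by simp
    have dx: "div_alloc_list v b p kr (x # xs) = (div_alloc_list v b p (kr - xi) xs)(x := xi)"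
      using True by (simp add: Let_def xi_def)
    have "(\<Sum>i\<in>set (x # xs). div_alloc_list v b p kr (x # xs) i)
        = xi + (\<Sum>i\<in>set xs. ((div_alloc_list v b p (kr - xi) xs)(x := xi)) i)"
      unfolding dx using Cons.prems by (simp add: sum.insert)
    also have "(\<Sum>i\<in>set xs. ((div_alloc_list v b p (kr - xi) xs)(x := xi)) i) = (\<Sum>i\<in>set xs. div_alloc_list v b p (kr - xi) xs i)"
      using Cons.prems by (intro sum.cong) auto
    finally have "(\<Sum>i\<in>set (x # xs). div_alloc_list v b p kr (x # xs) i)
        = xi + (\<Sum>i\<in>set xs. div_alloc_list v b p (kr - xi) xs i)" .
    then show ?thesis using ih by simp
  next
    case False
    have "(\<Sum>i\<in>set (x # xs). div_alloc_list v b p kr (x # xs) i)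
        = (\<Sum>i\<in>set xs. div_alloc_list v b p kr xs i)"
      using False Cons.prems dal_zero_out[of x xs] by (simp add: sum.insert)
    then show ?thesis using Cons.IH[of kr] Cons.prems by simp
  qed
qed

lemma pre_cong:
  "(\<And>x. x \<in> set \<pi> \<Longrightarrow> x \<noteq> i \<Longrightarrow> w1 x = w2 x) \<Longrightarrow> pre w1 \<pi> i = pre w2 \<pi> i"
  by (induction \<pi>) auto

lemma pre_mono:
  "(\<And>x. w1 x \<le> w2 x) \<Longrightarrow> pre w1 \<pi> i \<le> pre w2 \<pi> i"
  by (induction \<pi>) (auto intro: add_mono)

lemma Rf_min_aux: "a' \<le> a \<Longrightarrow> b' \<le> (b::real) \<Longrightarrow> min m (a + b) + min m (a' + b') \<le> min m (a + b') + min m (a' + b)"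
  by (smt (verit, best))

lemma Rf_min: "Rf (\<lambda>t. min m t)"
  unfolding Rf_def using Rf_min_aux by blast

definition wU :: "('a \<Rightarrow> real) \<Rightarrow> ('a \<Rightarrow> real) \<Rightarrow> real \<Rightarrow> 'a set \<Rightarrow> 'a \<Rightarrow> real" where
  "wU v b p U = (\<lambda>x. if x \<in> U \<and> p \<le> v x then b x / p else 0)"

definition gK :: "('a \<Rightarrow> real) \<Rightarrow> ('a \<Rightarrow> real) \<Rightarrow> real \<Rightarrow> real \<Rightarrow> 'a \<Rightarrow> real \<Rightarrow> real" where
  "gK v b p k = (\<lambda>i y. if p \<le> v i then min (b i / p) (max 0 (k - y)) else 0)"

lemma gK_anti: "y \<le> y' \<Longrightarrow> gK v b p k i y' \<le> gK v b p k i y"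
  unfolding gK_def by auto

lemma gK_nonneg: "p > 0 \<Longrightarrow> \<forall>x. 0 \<le> b x \<Longrightarrow> 0 \<le> gK v b p k i y"
  unfolding gK_def by auto

lemma wU_nonneg: "p > 0 \<Longrightarrow> \<forall>x. 0 \<le> b x \<Longrightarrow> \<forall>x. 0 \<le> wU v b p U x"
  unfolding wU_def by auto

lemma Acp_nonneg: "p > 0 \<Longrightarrow> \<forall>x. 0 \<le> b x \<Longrightarrow> 0 \<le> Acp w (gK v b p k) s G \<pi>"
  unfolding Acp_def by (intro sum_nonneg gK_nonneg) auto

lemma finite_Div_Alloc: "finite S \<Longrightarrow> finite (set_pmf (Div_Alloc v b S p k))"
  unfolding Div_Alloc_def by simp

lemma finite_modif: "finite U \<Longrightarrow> finite (set_pmf (modif_run v b p k U m L))"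
proof (induction L arbitrary: m)
  case Nil then show ?case by simp
next
  case (Cons i js)
  show ?case using Cons finite_Div_Alloc[of "insert i U" v b p k]
    by (auto simp: Let_def)
qed

lemma expectation_add_const:
  fixes M :: "real pmf"
  assumes "finite (set_pmf M)"
  shows "measure_pmf.expectation M ((+) c) = c + measure_pmf.expectation M (\<lambda>r. r)"
proof -
  have i1: "integrable M (\<lambda>r. r)" "integrable M (\<lambda>_. c)"
    by (rule integrable_measure_pmf_finite[OF assms])+
  from Bochner_Integration.integral_add[OF i1(2) i1(1)] show ?thesis by simp
qed

lemma avgP_cong: "(\<And>\<pi>. \<pi> \<in> permutations_of_set A \<Longrightarrow> h \<pi> = h' \<pi>) \<Longrightarrow> avgP A h = avgP A h'"
  unfolding avgP_def by (metis (no_types, lifting) sum.cong)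

lemma min_split_id: "(R::real) \<ge> 0 \<Longrightarrow> min X m + min (m - min X m) R = min m (X + R)"
  by (auto simp: min_def)

lemma modif_bound:
  assumes p: "p > 0" and b: "\<forall>x. 0 \<le> b x" and finU: "finite U" and k: "k \<ge> 0"
  shows "distinct L \<Longrightarrow> set L \<inter> U = {} \<Longrightarrow>
    measure_pmf.expectation (modif_run v b p k U m L) (\<lambda>r. r)
      \<ge> p * avgP (set L \<union> U) (\<lambda>\<pi>. min m (Acp (wU v b p U) (gK v b p k) 0 (set L) \<pi>))"
proof (induction L arbitrary: m)
  case Nil
  have "p * min m 0 \<le> 0" using p by (auto simp: min_def mult_nonneg_nonpos)
  then show ?case using finU by (simp add: Acp_def avgP_const)
next
  case (Cons i js)
  define w where "w = wU v b p U"
  define g where "g = gK v b p k"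
  define A where "A = Acp w g 0"
  define P where "P = permutations_of_set (insert i U)"
  define X where "X = (\<lambda>\<pi>. div_alloc_list v b p k \<pi> i)"
  define B where "B = set js \<union> U"
  have iU: "i \<notin> U" "i \<notin> set js" "set js \<inter> U = {}" "distinct js" using Cons.prems by auto
  have finB: "finite B" using finU by (simp add: B_def)
  have Pne: "P \<noteq> {}" "finite P" using finU by (auto simp: P_def)
  have w0: "\<forall>x. 0 \<le> w x" using wU_nonneg[OF p b] by (simp add: w_def)
  have XA: "X \<pi> = A {i} \<pi>" if "\<pi> \<in> P" for \<pi>
  proof -
    have d: "distinct \<pi>" "set \<pi> = insert i U" using that finU by (auto simp: P_def permutations_of_set_def)
    have "pre (\<lambda>x. if p \<le> v x then b x / p else 0) \<pi> i = pre w \<pi> i"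
      by (rule pre_cong) (use d in \<open>auto simp: w_def wU_def\<close>)
    then show ?thesis using dal_formula[OF p b k d(1), of v i] d
      unfolding X_def A_def Acp_def g_def gK_def by simp
  qed
  have anti: "\<And>i y y'. y \<le> y' \<Longrightarrow> g i y' \<le> g i y" by (simp add: g_def gK_anti)
  have Rnn: "0 \<le> A G \<pi>" for G \<pi> unfolding A_def g_def using Acp_nonneg[OF p b] .
  have step1: "measure_pmf.expectation (modif_run v b p k U m (i # js)) (\<lambda>r. r)
      = avgP (insert i U) (\<lambda>\<pi>. p * min (X \<pi>) m + measure_pmf.expectation (modif_run v b p k U (m - min (X \<pi>) m) js) (\<lambda>r. r))"
  proof -
    have eq: "modif_run v b p k U m (i # js) = pmf_of_set P \<bind> (\<lambda>\<pi>. map_pmf (\<lambda>r. p * min (X \<pi>) m + r) (modif_run v b p k U (m - min (X \<pi>) m) js))"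
      by (simp add: Div_Alloc_def bind_map_pmf Let_def X_def P_def)
    have "measure_pmf.expectation (modif_run v b p k U m (i # js)) (\<lambda>r. r)
      = (\<Sum>a\<in>P. measure_pmf.expectation (map_pmf (\<lambda>r. p * min (X a) m + r) (modif_run v b p k U (m - min (X a) m) js)) (\<lambda>r. r) /\<^sub>R real (card P))"
      unfolding eq by (rule pmf_expectation_bind_pmf_of_set) (use Pne finite_modif[OF finU] in auto)
    also have "\<dots> = (\<Sum>a\<in>P. (p * min (X a) m + measure_pmf.expectation (modif_run v b p k U (m - min (X a) m) js) (\<lambda>r. r)) / real (card P))"
    proof (intro sum.cong refl)
      fix a
      have "measure_pmf.expectation (map_pmf (\<lambda>r. p * min (X a) m + r) (modif_run v b p k U (m - min (X a) m) js)) (\<lambda>r. r)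
        = p * min (X a) m + measure_pmf.expectation (modif_run v b p k U (m - min (X a) m) js) (\<lambda>r. r)"
        by (simp add: expectation_add_const finite_modif[OF finU])
      then show "measure_pmf.expectation (map_pmf (\<lambda>r. p * min (X a) m + r) (modif_run v b p k U (m - min (X a) m) js)) (\<lambda>r. r) /\<^sub>R real (card P)
        = (p * min (X a) m + measure_pmf.expectation (modif_run v b p k U (m - min (X a) m) js) (\<lambda>r. r)) / real (card P)"
        by (simp add: divide_inverse_commute)
    qed
    also have "\<dots> = avgP (insert i U) (\<lambda>\<pi>. p * min (X \<pi>) m + measure_pmf.expectation (modif_run v b p k U (m - min (X \<pi>) m) js) (\<lambda>r. r))"
      unfolding avgP_def P_def by (simp add: sum_divide_distrib)
    finally show ?thesis .
  qed
  have step2: "measure_pmf.expectation (modif_run v b p k U m (i # js)) (\<lambda>r. r) \<ge> avgP (insert i U) (\<lambda>\<pi>. p * min (X \<pi>) m + p * avgP B (\<lambda>\<pi>2. min (m - min (X \<pi>) m) (A (set js) \<pi>2)))"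
    unfolding step1 by (intro avgP_mono add_left_mono) (use Cons.IH iU in \<open>auto simp: B_def A_def w_def g_def\<close>)
  have step3: "avgP (insert i U) (\<lambda>\<pi>. p * min (X \<pi>) m + p * avgP B (\<lambda>\<pi>2. min (m - min (X \<pi>) m) (A (set js) \<pi>2)))
     = p * avgP (insert i U) (\<lambda>\<pi>1. avgP B (\<lambda>\<pi>2. min m (A {i} \<pi>1 + A (set js) \<pi>2)))"
  proof -
    have pt: "p * min (X \<pi>) m + p * avgP B (\<lambda>\<pi>2. min (m - min (X \<pi>) m) (A (set js) \<pi>2))
         = p * avgP B (\<lambda>\<pi>2. min m (A {i} \<pi> + A (set js) \<pi>2))" if "\<pi> \<in> permutations_of_set (insert i U)" for \<pi>
    proof -
      have xa: "X \<pi> = A {i} \<pi>" using XA that P_def by simp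
      have "min (X \<pi>) m + avgP B (\<lambda>\<pi>2. min (m - min (X \<pi>) m) (A (set js) \<pi>2))
         = avgP B (\<lambda>\<pi>2. min (X \<pi>) m + min (m - min (X \<pi>) m) (A (set js) \<pi>2))"
        using avgP_add_const[OF finB] by simp
      also have "\<dots> = avgP B (\<lambda>\<pi>2. min m (A {i} \<pi> + A (set js) \<pi>2))"
        using min_split_id[OF Rnn] xa by simp
      finally show ?thesis by (simp add: distrib_left[symmetric])
    qed
    have "avgP (insert i U) (\<lambda>\<pi>. p * min (X \<pi>) m + p * avgP B (\<lambda>\<pi>2. min (m - min (X \<pi>) m) (A (set js) \<pi>2)))
       = avgP (insert i U) (\<lambda>\<pi>1. p * avgP B (\<lambda>\<pi>2. min m (A {i} \<pi>1 + A (set js) \<pi>2)))"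
      using pt by (rule avgP_cong)
    then show ?thesis by (simp add: avgP_cmult)
  qed
  have step4: "avgP ({i} \<union> set js \<union> U) (\<lambda>\<pi>. min m (A {i} \<pi> + A (set js) \<pi>))
      \<le> avgP ({i} \<union> U) (\<lambda>\<pi>1. avgP (set js \<union> U) (\<lambda>\<pi>2. min m (A {i} \<pi>1 + A (set js) \<pi>2)))"
    unfolding A_def
    by (rule split_ineq[OF w0 anti]) (use finU iU Rf_min[of m] in \<open>auto simp: w_def wU_def\<close>)
  have e5: "A {i} \<pi> + A (set js) \<pi> = A (set (i # js)) \<pi>" for \<pi>
    unfolding A_def Acp_def using iU by (simp add: sum.insert)
  have e6: "{i} \<union> set js \<union> U = set (i # js) \<union> U" "{i} \<union> U = insert i U" by auto
  have "p * avgP (set (i # js) \<union> U) (\<lambda>\<pi>. min m (A (set (i # js)) \<pi>))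
      \<le> p * avgP (insert i U) (\<lambda>\<pi>1. avgP B (\<lambda>\<pi>2. min m (A {i} \<pi>1 + A (set js) \<pi>2)))"
    using step4 p unfolding e5 e6 B_def by (intro mult_left_mono) auto
  also have "\<dots> \<le> measure_pmf.expectation (modif_run v b p k U m (i # js)) (\<lambda>r. r)"
    using step2 step3 by simp
  finally show ?case by (simp add: A_def w_def g_def)
qed

lemma integrable_fin_pmf: "finite (set_pmf M) \<Longrightarrow> integrable (measure_pmf M) (f :: _ \<Rightarrow> real)"
  by (rule integrable_measure_pmf_finite)

theorem lemma3:
  fixes v b :: "'a \<Rightarrow> real" and ord :: "'a set \<Rightarrow> 'a list"
    and S :: "'a set" and p k z :: real
  assumes "finite S"
    and "\<forall>i. v i \<ge> 0" and "\<forall>i. b i \<ge> 0"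
    and "p > 0" and "k \<ge> 0" and "0 \<le> z" and "z \<le> 1"
    and "\<forall>T. T \<subseteq> S \<longrightarrow> set (ord T) = T \<and> distinct (ord T)"
  shows "measure_pmf.expectation (Sell_Modif_rev v b ord S p k z) (\<lambda>r. r)
           \<ge> z * measure_pmf.expectation (Sell_Div_rev v b S p k) (\<lambda>r. r)"
proof -
  note finS = assms(1) and b = assms(3) and p = assms(4) and k = assms(5) and z = assms(6,7) and ordT = assms(8)
  define PiM where "PiM = Pi_pmf S False (\<lambda>_. bernoulli_pmf z)"
  define SP where "SP = set_pmf PiM"
  define F where "F = (\<lambda>f. modif_run v b p k {i \<in> S. \<not> f i} k (ord {i \<in> S. f i}))"
  define d where "d = (\<lambda>\<pi> i. div_alloc_list v b p k \<pi> i)"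
  define w' where "w' = (\<lambda>x. if p \<le> v x then b x / p else 0)"
  define g where "g = gK v b p k"
  have finSP: "finite SP" unfolding SP_def PiM_def using finS by (simp add: set_Pi_pmf finite_PiE_dflt)
  have SPout: "f x = False" if "f \<in> SP" "x \<notin> S" for f x
    using set_Pi_pmf_subset[OF finS, of False "\<lambda>_. bernoulli_pmf z"] that unfolding SP_def PiM_def by auto
  have ESD: "measure_pmf.expectation (Sell_Div_rev v b S p k) (\<lambda>r. r) = avgP S (\<lambda>\<pi>. p * (\<Sum>i\<in>S. d \<pi> i))"
    unfolding Sell_Div_rev_def Div_Alloc_def d_def using finS by (simp add: expectation_pmf_of_perms avgP_cmult)
  have ESM: "measure_pmf.expectation (Sell_Modif_rev v b ord S p k z) (\<lambda>r. r)
     = measure_pmf.expectation PiM (\<lambda>f. measure_pmf.expectation (F f) (\<lambda>r. r))"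
  proof -
    have "measure_pmf.expectation (Sell_Modif_rev v b ord S p k z) (\<lambda>r. r) = (\<Sum>f\<in>SP. pmf PiM f *\<^sub>R measure_pmf.expectation (F f) (\<lambda>r. r))"
      unfolding Sell_Modif_rev_def PiM_def[symmetric] F_def SP_def Let_def
      by (rule pmf_expectation_bind) (use finSP finS in \<open>auto simp: SP_def finite_modif\<close>)
    also have "\<dots> = measure_pmf.expectation PiM (\<lambda>f. measure_pmf.expectation (F f) (\<lambda>r. r))"
      by (rule integral_measure_pmf[OF finSP, symmetric]) (auto simp: SP_def)
    finally show ?thesis .
  qed
  define Q where "Q = (\<lambda>f. p * avgP S (\<lambda>\<pi>. \<Sum>i\<in>S. if f i then d \<pi> i else 0))"
  have FQ: "Q f \<le> measure_pmf.expectation (F f) (\<lambda>r. r)" if f: "f \<in> SP" for f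
  proof -
    define S1 where "S1 = {i \<in> S. f i}"
    define S2 where "S2 = {i \<in> S. \<not> f i}"
    have o: "set (ord S1) = S1" "distinct (ord S1)" using ordT by (auto simp: S1_def)
    have S12: "S1 \<union> S2 = S" "S1 \<inter> S2 = {}" by (auto simp: S1_def S2_def)
    have finS2: "finite S2" using finS by (simp add: S2_def)
    have mb: "measure_pmf.expectation (F f) (\<lambda>r. r)
       \<ge> p * avgP S (\<lambda>\<pi>. min k (Acp (wU v b p S2) g 0 S1 \<pi>))"
      using modif_bound[OF p b finS2 k o(2), where v=v and m=k] o S12
      unfolding F_def S1_def[symmetric] S2_def[symmetric] g_def by simp
    have pw: "(\<Sum>i\<in>S. if f i then d \<pi> i else 0) \<le> min k (Acp (wU v b p S2) g 0 S1 \<pi>)"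
      if "\<pi> \<in> permutations_of_set S" for \<pi>
    proof -
      have pd: "distinct \<pi>" "set \<pi> = S" using that by (auto simp: permutations_of_set_def)
      have e1: "(\<Sum>i\<in>S. if f i then d \<pi> i else 0) = (\<Sum>i\<in>S1. d \<pi> i)"
        unfolding S1_def using finS by (simp add: sum.inter_filter)
      have dnn: "0 \<le> d \<pi> i" for i unfolding d_def using dal_nonneg[OF p b k] .
      have "(\<Sum>i\<in>S1. d \<pi> i) \<le> (\<Sum>i\<in>S. d \<pi> i)"
        using finS dnn by (intro sum_mono2) (auto simp: S1_def)
      also have "\<dots> \<le> k" using dal_sum_le[OF p b k pd(1), of v] pd(2) unfolding d_def by simp
      finally have le1: "(\<Sum>i\<in>S1. d \<pi> i) \<le> k" .
      have le2: "(\<Sum>i\<in>S1. d \<pi> i) \<le> Acp (wU v b p S2) g 0 S1 \<pi>"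
        unfolding Acp_def
      proof (rule sum_mono)
        fix i assume iS1: "i \<in> S1"
        then have iS: "i \<in> set \<pi>" using pd S12 by auto
        have "d \<pi> i = g i (pre w' \<pi> i)"
          using dal_formula[OF p b k pd(1), of v i] iS unfolding d_def g_def gK_def w'_def by simp
        also have "\<dots> \<le> g i (0 + pre (wU v b p S2) \<pi> i)"
          unfolding g_def using pre_mono[of "wU v b p S2" w' \<pi> i] p b
          by (intro gK_anti) (auto simp: wU_def w'_def)
        finally show "d \<pi> i \<le> g i (0 + pre (wU v b p S2) \<pi> i)" .
      qed
      show ?thesis using e1 le1 le2 by simp
    qed
    have "Q f \<le> p * avgP S (\<lambda>\<pi>. min k (Acp (wU v b p S2) g 0 S1 \<pi>))"
      unfolding Q_def using p pw by (intro mult_left_mono avgP_mono) auto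
    then show ?thesis using mb by simp
  qed
  have EQ: "measure_pmf.expectation PiM Q \<le> measure_pmf.expectation PiM (\<lambda>f. measure_pmf.expectation (F f) (\<lambda>r. r))"
    by (rule integral_mono_AE) (use finSP FQ in \<open>auto simp: SP_def AE_measure_pmf_iff intro: integrable_fin_pmf\<close>)
  have ind: "measure_pmf.expectation PiM (\<lambda>f. if f i then c else 0) = c * z" if "i \<in> S" for i c
  proof -
    have "measure_pmf.expectation PiM (\<lambda>f. if f i then c else 0)
        = measure_pmf.expectation (map_pmf (\<lambda>f. f i) PiM) (\<lambda>x. if x then c else 0)" by simp
    also have "map_pmf (\<lambda>f. f i) PiM = bernoulli_pmf z"
      unfolding PiM_def using Pi_pmf_component[OF finS, of i False "\<lambda>_. bernoulli_pmf z"] that by simp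
    finally show ?thesis using z by simp
  qed
  have "measure_pmf.expectation PiM Q = z * avgP S (\<lambda>\<pi>. p * (\<Sum>i\<in>S. d \<pi> i))"
  proof -
    define c where "c = real (card (permutations_of_set S))"
    have Qe: "Q f = (\<Sum>\<pi>\<in>permutations_of_set S. \<Sum>i\<in>S. if f i then p * d \<pi> i / c else 0)" for f
      unfolding Q_def avgP_def c_def
      by (auto simp: sum_divide_distrib sum_distrib_left intro!: sum.cong)
    have "measure_pmf.expectation PiM Q = (\<Sum>\<pi>\<in>permutations_of_set S. \<Sum>i\<in>S. measure_pmf.expectation PiM (\<lambda>f. if f i then p * d \<pi> i / c else 0))"
      unfolding Qe
      by (subst Bochner_Integration.integral_sum, use finSP in \<open>simp add: SP_def integrable_fin_pmf\<close>,
          intro sum.cong refl, subst Bochner_Integration.integral_sum, use finSP in \<open>simp_all add: SP_def integrable_fin_pmf\<close>)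
    also have "\<dots> = (\<Sum>\<pi>\<in>permutations_of_set S. \<Sum>i\<in>S. p * d \<pi> i / c * z)"
      by (intro sum.cong refl ind)
    also have "\<dots> = z * avgP S (\<lambda>\<pi>. p * (\<Sum>i\<in>S. d \<pi> i))"
      unfolding avgP_def c_def
      by (simp add: sum_divide_distrib sum_distrib_left sum_distrib_right mult.commute mult.left_commute)
    finally show ?thesis .
  qed
  then show ?thesis using ESM ESD EQ by simp
qed

end
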